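(* Let $(\mathcal{K},[\cdot,\cdot])$ be a Krein space with fundamental symmetry $J$, let $\{k_n\}_{n\in\mathbb{N}}$ be a frame for the Krein space $\mathcal{K}$, and let $S$ be its frame operator. Then for every $k\in\mathcal{K}$, $$k=\sum_{n\in\mathbb{N}}[k_n,k]\,S^{-1}k_n\qquad\text{and}\qquad k=\sum_{n\in\mathbb{N}}[S^{-1}k_n,k]\,k_n,$$ and both series converge unconditionally (in the norm $\|\cdot\|_J$).
   Context: A Krein space $(\mathcal{K},[\cdot,\cdot])$ has a fundamental decomposition $\mathcal{K}=\mathcal{K}_+\oplus\mathcal{K}_-$ and fundamental symmetry $J(k^++k^-)=k^+-k^-$, such that $[h,k]_J:=[h,Jk]$ makes $\mathcal{K}$ a Hilbert space; $\|k\|_J:=\sqrt{[k,k]_J}$. A countable sequence $\{k_n\}$ is a frame for the Krein space $\mathcal{K}$ if there are $0<A\leq B<\infty$ with $A\|k\|_J^2\leq\sum_n|[k_n,k]|^2\leq B\|k\|_J^2$ for all $k$. Let $\mathfrak{k}_2(\mathbb{N})$ be $\ell_2(\mathbb{N})$ equipped with a Krein space inner product $[\cdot,\cdot]$ whose fundamental symmetry $\tilde J$ satisfies that $[\cdot,\cdot]_{\tilde J}$ equals the standard inner product of $\ell_2(\mathbb{N})$. The pre-frame operator is $T:\mathfrak{k}_2(\mathbb{N})\to\mathcal{K}$, $T(\alpha_n)_n=\sum_n\alpha_nk_n$, with Krein-space adjoint $T^*$ (i.e. $[T^*h,a]=[h,Ta]$), and the frame operator is $S:=T\tilde JT^*$;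 one has $Sk=\sum_n[k_n,k]k_n$ for $k\in\mathcal{K}$. The operator $S$ is self-adjoint with respect to $[\cdot,\cdot]$ and invertible with bounded inverse (established in the paper prior to this theorem). *)

theory Defs
  imports "HOL-Analysis.Analysis"
begin

text \<open>The library has no class of complex vector spaces, so the Krein space is modelled
  as a real Banach space 'a together with an explicit complex scalar multiplication
  smul (extending the real one), an indefinite inner product ip (conjugate-linear in
  the first and linear in the second argument, so that S k = sum of [k_n,k] k_n is linear)
  and a fundamental symmetry J such that [h,k]_J = [h, J k] is a Hilbert inner product
  inducing the norm of 'a.\<close>

definition krein_space ::
  "(complex \<Rightarrow> 'a::{real_normed_vector,banach} \<Rightarrow> 'a) \<Rightarrow> ('a \<Rightarrow> 'a \<Rightarrow> complex) \<Rightarrow> ('a \<Rightarrow> 'a) \<Rightarrow> bool"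
where
  "krein_space smul ip J \<longleftrightarrow>
     (\<forall>x. smul 1 x = x) \<and>
     (\<forall>a b x. smul (a * b) x = smul a (smul b x)) \<and>
     (\<forall>a b x. smul (a + b) x = smul a x + smul b x) \<and>
     (\<forall>a x y. smul a (x + y) = smul a x + smul a y) \<and>
     (\<forall>r x. smul (complex_of_real r) x = r *\<^sub>R x) \<and>
     (\<forall>x y z. ip x (y + z) = ip x y + ip x z) \<and>
     (\<forall>x c y. ip x (smul c y) = c * ip x y) \<and>
     (\<forall>x y. ip y x = cnj (ip x y)) \<and>
     (\<forall>x y. J (x + y) = J x + J y) \<and>
     (\<forall>c x. J (smul c x) = smul c (J x)) \<and>
     (\<forall>x. J (J x) = x) \<and>
     (\<forall>x y. ip (J x) y = ip x (J y)) \<and>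
     (\<forall>x. ip x (J x) = complex_of_real ((norm x)\<^sup>2))"

definition krein_frame ::
  "('a::real_normed_vector \<Rightarrow> 'a \<Rightarrow> complex) \<Rightarrow> (nat \<Rightarrow> 'a) \<Rightarrow> bool"
where
  "krein_frame ip kn \<longleftrightarrow>
     (\<exists>A B. 0 < A \<and> A \<le> B \<and>
        (\<forall>k. summable (\<lambda>n. (cmod (ip (kn n) k))\<^sup>2) \<and>
             A * (norm k)\<^sup>2 \<le> (\<Sum>n. (cmod (ip (kn n) k))\<^sup>2) \<and>
             (\<Sum>n. (cmod (ip (kn n) k))\<^sup>2) \<le> B * (norm k)\<^sup>2))"

definition frame_operator ::
  "(complex \<Rightarrow> 'a::{real_normed_vector} \<Rightarrow> 'a) \<Rightarrow> ('a \<Rightarrow> 'a \<Rightarrow> complex) \<Rightarrow> (nat \<Rightarrow> 'a) \<Rightarrow> 'a \<Rightarrow> 'a"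
where
  "frame_operator smul ip kn k = infsum (\<lambda>n. smul (ip (kn n) k) (kn n)) UNIV"

end

theory Submission imports Defs begin

lemma bessel_summable:
  fixes f :: "'i \<Rightarrow> 'b::banach" and g :: "'i \<Rightarrow> real"
  assumes gnn: "\<And>x. g x \<ge> 0" and gs: "g summable_on A" and Bpos: "B \<ge> 0"
    and bd: "\<And>F. finite F \<Longrightarrow> F \<subseteq> A \<Longrightarrow> (norm (sum f F))\<^sup>2 \<le> B * sum g F"
  shows "f summable_on A"
proof -
  from gs obtain L where lim: \<open>(sum g \<longlongrightarrow> L) (finite_subsets_at_top A)\<close>
    unfolding has_sum_def summable_on_def by blast
  have \<open>\<exists>P. eventually P (finite_subsets_at_top A) \<and>
              (\<forall>F F'. P F \<and> P F' \<longrightarrow> dist (sum f F) (sum f F') < e)\<close> if \<open>e>0\<close> for e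
  proof -
    define d P where \<open>d = e^2/(8*(B+1))\<close> and \<open>P F \<longleftrightarrow> finite F \<and> F \<subseteq> A \<and> dist (sum g F) L < d\<close> for F
    then have \<open>d > 0\<close> using Bpos that by simp
    have ev_P: \<open>eventually P (finite_subsets_at_top A)\<close>
      using lim
      by (auto simp add: P_def[abs_def] \<open>0 < d\<close> eventually_conj_iff eventually_finite_subsets_at_top_weakI tendsto_iff)
    moreover have \<open>dist (sum f F1) (sum f F2) < e\<close> if \<open>P F1\<close> and \<open>P F2\<close> for F1 F2
    proof -
      from ev_P
      obtain F' where \<open>finite F'\<close> and \<open>F' \<subseteq> A\<close> and P_sup_F': \<open>finite F \<and> F \<supseteq> F' \<and> F \<subseteq> A \<Longrightarrow> P F\<close> for F
        by atomize_elim (simp add: eventually_finite_subsets_at_top)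
      define F where \<open>F = F' \<union> F1 \<union> F2\<close>
      have \<open>finite F\<close> and \<open>F \<subseteq> A\<close>
        using F_def P_def[abs_def] that \<open>finite F'\<close> \<open>F' \<subseteq> A\<close> by auto
      have dist_F: \<open>dist (sum g F) L < d\<close>
        by (metis F_def \<open>F \<subseteq> A\<close> P_def P_sup_F' \<open>finite F\<close> le_supE order_refl)
      have dist_F_subset: \<open>dist (sum f F) (sum f F') < e/2\<close> if F': \<open>F' \<subseteq> F\<close> \<open>P F'\<close> for F'
      proof -
        have fin': "finite F'" using F' \<open>finite F\<close> finite_subset by blast
        have \<open>dist (sum f F) (sum f F') = norm (sum f (F-F'))\<close>
          unfolding dist_norm using \<open>finite F\<close> F' by (subst sum_diff) auto
        moreover have \<open>(norm (sum f (F-F')))\<^sup>2 \<le> B * sum g (F - F')\<close>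
          using bd[of "F-F'"] \<open>finite F\<close> \<open>F \<subseteq> A\<close> by auto
        moreover have \<open>sum g (F - F') = sum g F - sum g F'\<close>
          using \<open>finite F\<close> F' by (subst sum_diff) auto
        moreover have "sum g F - sum g F' < 2*d"
          using dist_F F' unfolding P_def dist_norm real_norm_def by linarith
        moreover have "B * (2*d) < (e/2)^2"
          using Bpos \<open>e>0\<close> by (simp add: d_def field_simps power2_eq_square)
        moreover have "sum g (F - F') \<ge> 0" by (simp add: gnn sum_nonneg)
        ultimately have "(norm (sum f (F-F')))\<^sup>2 < (e/2)^2"
          by (smt (verit, best) Bpos mult_left_mono)
        then have "norm (sum f (F-F')) < e/2"
          using \<open>e>0\<close> by (meson power_less_imp_less_base less_le_not_le divide_pos_pos zero_less_numeral less_imp_le)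
        then show ?thesis using \<open>dist (sum f F) (sum f F') = _\<close> by simp
      qed
      have \<open>dist (sum f F1) (sum f F2) \<le> dist (sum f F) (sum f F1) + dist (sum f F) (sum f F2)\<close>
        by (rule dist_triangle3)
      also have \<open>\<dots> < e/2 + e/2\<close>
        by (intro add_strict_mono dist_F_subset that) (auto simp: F_def)
      finally show \<open>dist (sum f F1) (sum f F2) < e\<close> by simp
    qed
    ultimately show ?thesis by blast
  qed
  then have \<open>cauchy_filter (filtermap (sum f) (finite_subsets_at_top A))\<close>
    by (simp add: cauchy_filter_metric_filtermap)
  moreover have "complete (UNIV::'b set)"
    by (meson Cauchy_convergent UNIV_I complete_def convergent_def)
  ultimately obtain L' where \<open>(sum f \<longlongrightarrow> L') (finite_subsets_at_top A)\<close>
    using complete_uniform[where S=UNIV] by (force simp add: filterlim_def)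
  then show ?thesis
    using summable_on_def has_sum_def by blast
qed

lemma cancel_aux: "x - u + v = x \<Longrightarrow> u = (v::'b::ab_group_add)"
  by (metis add_diff_cancel_left' diff_add_cancel diff_diff_eq2 diff_eq_eq)

locale kr =
  fixes smul :: "complex \<Rightarrow> 'a::{real_normed_vector,banach} \<Rightarrow> 'a"
    and ip :: "'a \<Rightarrow> 'a \<Rightarrow> complex"
    and J :: "'a \<Rightarrow> 'a"
  assumes K: "krein_space smul ip J"
begin

lemma sm_mult: "smul (a * b) x = smul a (smul b x)" using K unfolding krein_space_def by meson
lemma sm_addc: "smul (a + b) x = smul a x + smul b x" using K unfolding krein_space_def by meson
lemma sm_add: "smul a (x + y) = smul a x + smul a y" using K unfolding krein_space_def by meson
lemma sm_real: "smul (complex_of_real r) x = r *\<^sub>R x" using K unfolding krein_space_def by meson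
lemma ip_add: "ip x (y + z) = ip x y + ip x z" using K unfolding krein_space_def by meson
lemma ip_sm: "ip x (smul c y) = c * ip x y" using K unfolding krein_space_def by meson
lemma ip_cnj: "ip y x = cnj (ip x y)" using K unfolding krein_space_def by meson
lemma J_add: "J (x + y) = J x + J y" using K unfolding krein_space_def by meson
lemma J_sm: "J (smul c x) = smul c (J x)" using K unfolding krein_space_def by meson
lemma JJ[simp]: "J (J x) = x" using K unfolding krein_space_def by meson
lemma ipJ: "ip (J x) y = ip x (J y)" using K unfolding krein_space_def by meson
lemma ipn: "ip x (J x) = complex_of_real ((norm x)\<^sup>2)" using K unfolding krein_space_def by meson

lemma ip_add_left: "ip (x + y) z = ip x z + ip y z"
proof -
  have "ip (x+y) z = cnj (ip z (x+y))" by (rule ip_cnj)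
  also have "... = cnj (ip z x) + cnj (ip z y)" by (simp add: ip_add)
  also have "... = ip x z + ip y z" by (simp add: ip_cnj[of x z] ip_cnj[of y z])
  finally show ?thesis .
qed
lemma ip_sm_left: "ip (smul c x) y = cnj c * ip x y"
proof -
  have "ip (smul c x) y = cnj (ip y (smul c x))" by (rule ip_cnj)
  also have "... = cnj c * cnj (ip y x)" by (simp add: ip_sm)
  also have "... = cnj c * ip x y" by (simp add: ip_cnj[of x y])
  finally show ?thesis .
qed
lemma ip_scaleR: "ip x (r *\<^sub>R y) = r * ip x y"
  by (simp only: sm_real[symmetric] ip_sm)
lemma ip_scaleR_left: "ip (r *\<^sub>R x) y = r * ip x y"
  by (simp only: sm_real[symmetric] ip_sm_left complex_cnj_complex_of_real)
lemma ip_zero[simp]: "ip x 0 = 0"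
  using ip_scaleR[of x 0 0] by simp
lemma ip_zero_left[simp]: "ip 0 x = 0"
  using ip_scaleR_left[of 0 0 x] by simp
lemma ip_minus: "ip x (- y) = - ip x y"
  using ip_scaleR[of x "-1" y] by simp
lemma ip_diff: "ip x (y - z) = ip x y - ip x z"
  using ip_add[of x y "-z"] ip_minus[of x z] by simp
lemma ip_minus_left: "ip (- x) y = - ip x y"
  using ip_scaleR_left[of "-1" x y] by simp
lemma ip_diff_left: "ip (x - y) z = ip x z - ip y z"
  using ip_add_left[of x "-y" z] ip_minus_left[of y z] by simp
lemma ip_sum: "ip x (sum f F) = (\<Sum>n\<in>F. ip x (f n))"
  by (induction F rule: infinite_finite_induct) (auto simp: ip_add)

lemma J_scaleR: "J (r *\<^sub>R x) = r *\<^sub>R J x" by (simp only: sm_real[symmetric] J_sm)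
lemma J_zero[simp]: "J 0 = 0" using J_scaleR[of 0 0] by simp
lemma J_minus: "J (- x) = - J x" using J_scaleR[of "-1" x] by simp
lemma J_diff: "J (x - y) = J x - J y" using J_add[of x "-y"] J_minus[of y] by simp

lemma norm_J[simp]: "norm (J x) = norm x"
proof -
  have "complex_of_real ((norm (J x))\<^sup>2) = complex_of_real ((norm x)\<^sup>2)"
  proof -
    have "complex_of_real ((norm (J x))\<^sup>2) = ip (J x) (J (J x))" by (simp only: ipn)
    also have "... = ip x (J x)" by (simp only: JJ ipJ)
    finally show ?thesis by (simp only: ipn)
  qed
  then have "(norm (J x))\<^sup>2 = (norm x)\<^sup>2" using of_real_eq_iff by blast
  then show ?thesis by simp
qed

definition rg where "rg x y = Re (ip x (J y))"

lemma rg_sym: "rg x y = rg y x"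
proof -
  have "ip y (J x) = ip (J y) x" by (simp add: ipJ)
  also have "... = cnj (ip x (J y))" by (rule ip_cnj)
  finally show ?thesis unfolding rg_def by simp
qed

lemma rg_add_right: "rg x (y + z) = rg x y + rg x z" by (simp add: rg_def J_add ip_add)
lemma rg_scaleR_right: "rg x (r *\<^sub>R y) = r * rg x y" by (simp add: rg_def J_scaleR ip_scaleR)
lemma rg_add_left: "rg (y + z) x = rg y x + rg z x" by (simp only: rg_sym[of "y+z" x] rg_add_right rg_sym[of x y] rg_sym[of x z])
lemma rg_scaleR_left: "rg (r *\<^sub>R y) x = r * rg y x" by (simp only: rg_sym[of "r *\<^sub>R y" x] rg_scaleR_right rg_sym[of x y])
lemma rg_self: "rg x x = (norm x)\<^sup>2" by (simp add: rg_def ipn)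
lemma rg_diff_right: "rg x (y - z) = rg x y - rg x z"
  using rg_add_right[of x y "(-1) *\<^sub>R z"] rg_scaleR_right[of x "-1" z] by simp
lemma rg_diff_left: "rg (y - z) x = rg y x - rg z x" by (simp only: rg_sym[of "y-z" x] rg_diff_right rg_sym[of x y] rg_sym[of x z])

lemma norm_diff_sq: "(norm (x - y))\<^sup>2 = (norm x)\<^sup>2 - 2 * rg x y + (norm y)\<^sup>2"
proof -
  have "(norm (x - y))\<^sup>2 = rg (x - y) (x - y)" by (simp add: rg_self)
  also have "... = rg x x - rg x y - (rg y x - rg y y)" by (simp add: rg_diff_left rg_diff_right)
  finally show ?thesis by (simp add: rg_self rg_sym[of y x])
qed

lemma rg_CS: "\<bar>rg x y\<bar> \<le> norm x * norm y"
proof (cases "x = 0 \<or> y = 0")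
  case True
  then show ?thesis using rg_scaleR_left[of 0 0 y] rg_scaleR_right[of x 0 0] by auto
next
  case False
  define u where "u = (1 / norm x) *\<^sub>R x"
  define v where "v = (1 / norm y) *\<^sub>R y"
  have nu: "norm u = 1" "norm v = 1" using False by (auto simp: u_def v_def)
  have "0 \<le> (norm (u - v))\<^sup>2" by simp
  then have 1: "rg u v \<le> 1" using nu by (simp add: norm_diff_sq)
  have "0 \<le> (norm (u - (- v)))\<^sup>2" by simp
  then have "rg u (-v) \<le> 1" using nu by (simp add: norm_diff_sq del: diff_minus_eq_add)
  moreover have "rg u (-v) = - rg u v" using rg_scaleR_right[of u "-1" v] by simp
  ultimately have 2: "- rg u v \<le> 1" by simp
  have "rg u v = rg x y / (norm x * norm y)"
    by (simp add: u_def v_def rg_scaleR_left rg_scaleR_right)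
  with 1 2 False show ?thesis by (auto simp: abs_le_iff field_simps)
qed

lemma norm_sm: "norm (smul c x) = cmod c * norm x"
proof -
  have "complex_of_real ((norm (smul c x))\<^sup>2) = cnj c * c * complex_of_real ((norm x)\<^sup>2)"
    by (simp only: ipn[symmetric] J_sm ip_sm ip_sm_left mult.assoc mult.left_commute[of c "cnj c"])
  also have "... = complex_of_real ((cmod c)\<^sup>2) * complex_of_real ((norm x)\<^sup>2)"
    by (simp only: complex_norm_square mult.commute[of "cnj c" c])
  also have "... = complex_of_real ((cmod c)\<^sup>2 * (norm x)\<^sup>2)" by simp
  finally have "(norm (smul c x))\<^sup>2 = (cmod c)\<^sup>2 * (norm x)\<^sup>2"
    by (simp only: of_real_eq_iff)
  then have "(norm (smul c x))\<^sup>2 = (cmod c * norm x)\<^sup>2"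
    by (simp only: power_mult_distrib)
  then show ?thesis by (simp add: power2_eq_iff_nonneg)
qed

lemma ip_CS: "cmod (ip x y) \<le> norm x * norm y"
proof (cases "ip x y = 0")
  case True then show ?thesis by simp
next
  case False
  define a where "a = ip x y"
  define w where "w = smul (cnj a / cmod a) (J y)"
  have "ip x (J w) = (cnj a / cmod a) * ip x y" by (simp add: w_def J_sm ip_sm)
  also have "... = (cnj a * a) / complex_of_real (cmod a)" by (simp add: a_def)
  also have "cnj a * a = complex_of_real ((cmod a)\<^sup>2)"
    by (simp only: complex_norm_square mult.commute[of "cnj a" a])
  also have "complex_of_real ((cmod a)\<^sup>2) / complex_of_real (cmod a) = complex_of_real ((cmod a)\<^sup>2 / cmod a)"
    by simp
  also have "(cmod a)\<^sup>2 / cmod a = cmod a" by (simp add: power2_eq_square)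
  finally have "rg x w = cmod a" by (simp add: rg_def)
  moreover have "norm w = norm y" using False by (simp add: w_def norm_sm a_def norm_divide)
  ultimately show ?thesis using rg_CS[of x w] by (simp add: a_def)
qed

lemma bl_ip: "bounded_linear (ip x)"
proof (rule bounded_linear_intro[where K="norm x"])
  show "ip x (y + z) = ip x y + ip x z" for y z by (rule ip_add)
  show "ip x (r *\<^sub>R y) = r *\<^sub>R ip x y" for r y by (simp only: ip_scaleR scaleR_conv_of_real)
  show "norm (ip x y) \<le> norm y * norm x" for y
    using ip_CS[of x y] by (simp only: norm_complex_def mult.commute)
qed
lemma bl_sm: "bounded_linear (smul c)"
proof (rule bounded_linear_intro[where K="cmod c"])
  show "smul c (x + y) = smul c x + smul c y" for x y by (rule sm_add)
  show "smul c (r *\<^sub>R x) = r *\<^sub>R smul c x" for r x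
  proof -
    have "smul c (r *\<^sub>R x) = smul c (smul (complex_of_real r) x)" by (simp only: sm_real)
    also have "... = smul (c * complex_of_real r) x" by (simp only: sm_mult)
    also have "... = smul (complex_of_real r * c) x" by (simp only: mult.commute)
    also have "... = smul (complex_of_real r) (smul c x)" by (simp only: sm_mult)
    also have "... = r *\<^sub>R smul c x" by (simp only: sm_real)
    finally show ?thesis .
  qed
  show "norm (smul c x) \<le> norm x * cmod c" for x by (simp add: norm_sm mult.commute)
qed
lemma bl_J: "bounded_linear J"
proof (rule bounded_linear_intro[where K="1"])
  show "J (x + y) = J x + J y" for x y by (rule J_add)
  show "J (r *\<^sub>R x) = r *\<^sub>R J x" for r x by (rule J_scaleR)
  show "norm (J x) \<le> norm x * 1" for x by simp
qed

end

locale kf = kr +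
  fixes kn :: "nat \<Rightarrow> 'a" and A B :: real
  assumes Apos: "0 < A" and AB: "A \<le> B"
    and fsum: "\<And>k. summable (\<lambda>n. (cmod (ip (kn n) k))\<^sup>2)"
    and flow: "\<And>k. A * (norm k)\<^sup>2 \<le> (\<Sum>n. (cmod (ip (kn n) k))\<^sup>2)"
    and fup: "\<And>k. (\<Sum>n. (cmod (ip (kn n) k))\<^sup>2) \<le> B * (norm k)\<^sup>2"
begin

definition s where "s k = (\<Sum>n. (cmod (ip (kn n) k))\<^sup>2)"
definition S where "S = frame_operator smul ip kn"

lemma Bpos: "0 < B" using Apos AB by simp

lemma bessel_fin:
  assumes "finite F"
  shows "(norm (\<Sum>n\<in>F. smul (a n) (kn n)))\<^sup>2 \<le> B * (\<Sum>n\<in>F. (cmod (a n))\<^sup>2)"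
proof -
  define x where "x = (\<Sum>n\<in>F. smul (a n) (kn n))"
  define h where "h = J x"
  have "ip h x = complex_of_real ((norm x)\<^sup>2)" by (simp add: h_def ipJ ipn)
  then have "(norm x)\<^sup>2 = cmod (ip h x)" by (simp del: of_real_power)
  also have "ip h x = (\<Sum>n\<in>F. a n * ip h (kn n))" by (simp add: x_def ip_sum ip_sm)
  also have "cmod ... \<le> (\<Sum>n\<in>F. cmod (a n) * cmod (ip (kn n) h))"
    by (rule order.trans[OF norm_sum]) (simp add: norm_mult ip_cnj[of h])
  also have "... \<le> L2_set (\<lambda>n. cmod (a n)) F * L2_set (\<lambda>n. cmod (ip (kn n) h)) F"
    using L2_set_mult_ineq[of "\<lambda>n. cmod (a n)" "\<lambda>n. cmod (ip (kn n) h)" F] by simp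
  also have "L2_set (\<lambda>n. cmod (ip (kn n) h)) F \<le> sqrt (B * (norm x)\<^sup>2)"
  proof -
    have "(\<Sum>n\<in>F. (cmod (ip (kn n) h))\<^sup>2) \<le> (\<Sum>n. (cmod (ip (kn n) h))\<^sup>2)"
      by (rule sum_le_suminf[OF fsum assms]) auto
    also have "... \<le> B * (norm x)\<^sup>2" using fup[of h] by (simp add: h_def)
    finally show ?thesis unfolding L2_set_def by simp
  qed
  finally have 1: "(norm x)\<^sup>2 \<le> L2_set (\<lambda>n. cmod (a n)) F * sqrt (B * (norm x)\<^sup>2)"
    by (simp add: L2_set_nonneg mult_left_mono)
  have "sqrt (B * (norm x)\<^sup>2) = sqrt B * norm x" by (simp add: real_sqrt_mult)
  with 1 have "(norm x)\<^sup>2 \<le> L2_set (\<lambda>n. cmod (a n)) F * sqrt B * norm x" by simp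
  then have "norm x \<le> L2_set (\<lambda>n. cmod (a n)) F * sqrt B"
    using Bpos by (cases "norm x = 0") (auto simp: power2_eq_square L2_set_nonneg)
  then have "(norm x)\<^sup>2 \<le> (L2_set (\<lambda>n. cmod (a n)) F * sqrt B)\<^sup>2"
    by (simp add: power_mono)
  also have "... = B * (\<Sum>n\<in>F. (cmod (a n))\<^sup>2)"
    using Bpos by (simp add: power_mult_distrib L2_set_def sum_nonneg)
  finally show ?thesis by (simp add: x_def)
qed

lemma bessel_has:
  assumes sa: "summable (\<lambda>n. (cmod (a n))\<^sup>2)"
  shows "(\<lambda>n. smul (a n) (kn n)) summable_on UNIV"
    and "(norm (infsum (\<lambda>n. smul (a n) (kn n)) UNIV))\<^sup>2 \<le> B * (\<Sum>n. (cmod (a n))\<^sup>2)"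
proof -
  have g1: "(\<lambda>n. (cmod (a n))\<^sup>2) summable_on UNIV"
    by (rule summable_nonneg_imp_summable_on_strong[OF sa]) simp
  have g0: "\<And>n. 0 \<le> (\<lambda>n. (cmod (a n))\<^sup>2) n" by simp
  have b0: "0 \<le> B" using Bpos by simp
  have bd: "\<And>F. finite F \<Longrightarrow> F \<subseteq> UNIV \<Longrightarrow> (norm (sum (\<lambda>n. smul (a n) (kn n)) F))\<^sup>2 \<le> B * sum (\<lambda>n. (cmod (a n))\<^sup>2) F"
    using bessel_fin by blast
  show sm: "(\<lambda>n. smul (a n) (kn n)) summable_on UNIV"
    by (rule bessel_summable[OF g0 g1 b0 bd])
  have lim: "(sum (\<lambda>n. smul (a n) (kn n)) \<longlongrightarrow> infsum (\<lambda>n. smul (a n) (kn n)) UNIV) (finite_subsets_at_top UNIV)"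
    using has_sum_infsum[OF sm] unfolding has_sum_def .
  have ev: "eventually (\<lambda>F. norm (sum (\<lambda>n. smul (a n) (kn n)) F) \<le> sqrt (B * (\<Sum>n. (cmod (a n))\<^sup>2))) (finite_subsets_at_top UNIV)"
  proof (rule eventually_finite_subsets_at_top_weakI)
    fix F :: "nat set" assume "finite F"
    have "(\<Sum>n\<in>F. (cmod (a n))\<^sup>2) \<le> (\<Sum>n. (cmod (a n))\<^sup>2)"
      by (rule sum_le_suminf[OF sa \<open>finite F\<close>]) auto
    then have "B * (\<Sum>n\<in>F. (cmod (a n))\<^sup>2) \<le> B * (\<Sum>n. (cmod (a n))\<^sup>2)"
      using Bpos by (intro mult_left_mono) auto
    then have "(norm (sum (\<lambda>n. smul (a n) (kn n)) F))\<^sup>2 \<le> B * (\<Sum>n. (cmod (a n))\<^sup>2)"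
      using bessel_fin[OF \<open>finite F\<close>, of a] by linarith
    then show "norm (sum (\<lambda>n. smul (a n) (kn n)) F) \<le> sqrt (B * (\<Sum>n. (cmod (a n))\<^sup>2))"
      using real_le_rsqrt by blast
  qed
  have "norm (infsum (\<lambda>n. smul (a n) (kn n)) UNIV) \<le> sqrt (B * (\<Sum>n. (cmod (a n))\<^sup>2))"
    by (rule Lim_norm_ubound[OF _ lim ev]) (simp add: finite_subsets_at_top_neq_bot)
  moreover have "0 \<le> B * (\<Sum>n. (cmod (a n))\<^sup>2)"
    using Bpos by (simp add: suminf_nonneg[OF sa])
  ultimately show "(norm (infsum (\<lambda>n. smul (a n) (kn n)) UNIV))\<^sup>2 \<le> B * (\<Sum>n. (cmod (a n))\<^sup>2)"
    by (metis norm_ge_zero power_mono real_sqrt_pow2)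
qed

lemma S_has: "((\<lambda>n. smul (ip (kn n) k) (kn n)) has_sum S k) UNIV"
  unfolding S_def frame_operator_def using bessel_has(1)[OF fsum] by simp

lemma S_bound: "(norm (S k))\<^sup>2 \<le> B * s k"
  unfolding S_def frame_operator_def s_def using bessel_has(2)[OF fsum] by simp


lemma S_unique: "((\<lambda>n. smul (ip (kn n) k) (kn n)) has_sum y) UNIV \<Longrightarrow> S k = y"
  using S_has has_sum_unique by blast

lemma s_has: "((\<lambda>n. complex_of_real ((cmod (ip (kn n) k))\<^sup>2)) has_sum complex_of_real (s k)) UNIV"
proof -
  have "((\<lambda>n. (cmod (ip (kn n) k))\<^sup>2) has_sum s k) UNIV"
    unfolding s_def by (rule sums_nonneg_imp_has_sum) (auto intro: summable_sums fsum)
  from has_sum_bounded_linear[OF bounded_linear_of_real this] show ?thesis .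
qed

lemma ip_S: "ip k (S k) = complex_of_real (s k)"
proof -
  have "((\<lambda>n. ip k (smul (ip (kn n) k) (kn n))) has_sum ip k (S k)) UNIV"
    by (rule has_sum_bounded_linear[OF bl_ip S_has])
  moreover have "ip k (smul (ip (kn n) k) (kn n)) = complex_of_real ((cmod (ip (kn n) k))\<^sup>2)" for n
    by (simp add: ip_sm ip_cnj[of k] complex_norm_square del: of_real_power)
  ultimately have "((\<lambda>n. complex_of_real ((cmod (ip (kn n) k))\<^sup>2)) has_sum ip k (S k)) UNIV"
    by (simp only:)
  from has_sum_unique[OF this s_has] show ?thesis .
qed

lemma s_low: "A * (norm k)\<^sup>2 \<le> s k" using flow by (simp add: s_def)
lemma s_nonneg: "0 \<le> s k" unfolding s_def by (rule suminf_nonneg[OF fsum]) simp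

lemma S_add: "S (x + y) = S x + S y"
proof (rule S_unique)
  have "((\<lambda>n. smul (ip (kn n) x) (kn n) + smul (ip (kn n) y) (kn n)) has_sum S x + S y) UNIV"
    by (rule has_sum_add[OF S_has S_has])
  then show "((\<lambda>n. smul (ip (kn n) (x + y)) (kn n)) has_sum S x + S y) UNIV"
    by (simp add: ip_add sm_addc)
qed

lemma S_sm: "S (smul c x) = smul c (S x)"
proof (rule S_unique)
  have "((\<lambda>n. smul c (smul (ip (kn n) x) (kn n))) has_sum smul c (S x)) UNIV"
    by (rule has_sum_bounded_linear[OF bl_sm S_has])
  then show "((\<lambda>n. smul (ip (kn n) (smul c x)) (kn n)) has_sum smul c (S x)) UNIV"
    by (simp add: ip_sm sm_mult)
qed

lemma S_scaleR: "S (r *\<^sub>R x) = r *\<^sub>R S x" by (simp only: sm_real[symmetric] S_sm)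
lemma S_diff: "S (x - y) = S x - S y"
  using S_add[of x "(-1) *\<^sub>R y"] S_scaleR[of "-1" y] by simp

lemma S_lower: "A * norm k \<le> norm (S k)"
proof -
  have "A * (norm k)\<^sup>2 \<le> s k" by (rule s_low)
  also have "s k = cmod (ip k (S k))" using ip_S s_nonneg by simp
  also have "... \<le> norm k * norm (S k)" by (rule ip_CS)
  finally have "(A * norm k) * norm k \<le> norm (S k) * norm k"
    by (simp add: power2_eq_square algebra_simps)
  then show ?thesis by (cases "norm k = 0") (auto simp: Apos mult_right_le_imp_le)
qed

lemma S_selfadj: "ip (S x) y = ip x (S y)"
proof -
  have h1: "((\<lambda>n. ip x (smul (ip (kn n) y) (kn n))) has_sum ip x (S y)) UNIV"
    by (rule has_sum_bounded_linear[OF bl_ip S_has])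
  have h2: "((\<lambda>n. ip y (smul (ip (kn n) x) (kn n))) has_sum ip y (S x)) UNIV"
    by (rule has_sum_bounded_linear[OF bl_ip S_has])
  then have "((\<lambda>n. cnj (ip y (smul (ip (kn n) x) (kn n)))) has_sum cnj (ip y (S x))) UNIV"
    by simp
  moreover have "cnj (ip y (smul (ip (kn n) x) (kn n))) = ip x (smul (ip (kn n) y) (kn n))" for n
    by (simp add: ip_sm ip_cnj[of y] ip_cnj[of x] mult.commute)
  ultimately have "((\<lambda>n. ip x (smul (ip (kn n) y) (kn n))) has_sum cnj (ip y (S x))) UNIV" by simp
  with h1 have "ip x (S y) = cnj (ip y (S x))" using has_sum_unique by blast
  then show ?thesis by (simp add: ip_cnj[of y])
qed

lemma S_inj: "inj S"
proof (rule injI)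
  fix x y assume "S x = S y"
  then have "S (x - y) = 0" by (simp add: S_diff)
  then have "A * norm (x - y) \<le> 0" using S_lower[of "x - y"] by simp
  then show "x = y" using Apos by (simp add: mult_le_0_iff)
qed

definition Q where "Q w = w - (1 / B) *\<^sub>R J (S w)"

lemma Q_bound: "norm (Q w) \<le> sqrt (1 - A / B) * norm w"
proof -
  have rgw: "rg w ((1 / B) *\<^sub>R J (S w)) = (1/B) * s w"
    by (simp add: rg_scaleR_right rg_def ip_S J_scaleR ip_scaleR)
  have "(norm ((1 / B) *\<^sub>R J (S w)))\<^sup>2 = (1/B)^2 * (norm (S w))\<^sup>2"
    using Bpos by (simp add: power_mult_distrib power_divide)
  also have "... \<le> (1/B)^2 * (B * s w)" by (rule mult_left_mono[OF S_bound]) simp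
  also have "... = (1/B) * s w" using Bpos by (simp add: power2_eq_square)
  finally have "(norm (Q w))\<^sup>2 \<le> (norm w)\<^sup>2 - (1/B) * s w"
    unfolding Q_def norm_diff_sq rgw by simp
  also have "... \<le> (norm w)\<^sup>2 - (1/B) * (A * (norm w)\<^sup>2)"
    using s_low[of w] Bpos by (simp add: divide_right_mono)
  also have "... = (sqrt (1 - A / B) * norm w)\<^sup>2"
    using Apos AB Bpos by (simp add: power_mult_distrib field_simps)
  finally show ?thesis by (rule power2_le_imp_le) (use Apos AB Bpos in simp)
qed

lemma Q_diff: "Q x - Q y = Q (x - y)"
  by (simp add: Q_def S_diff J_diff scaleR_diff_right)

lemma S_surj: "surj S"
proof -
  { fix z
    define F where "F x = Q x + (1/B) *\<^sub>R J z" for x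
    have c: "0 \<le> sqrt (1 - A / B)" "sqrt (1 - A / B) < 1" using Apos AB Bpos by auto
    have "\<exists>!x. F x = x"
    proof (rule banach_fix_type[OF c])
      show "\<forall>x y. dist (F x) (F y) \<le> sqrt (1 - A / B) * dist x y"
      proof (intro allI)
        fix x y
        have "F x - F y = Q x - Q y" by (simp add: F_def)
        also have "... = Q (x - y)" by (rule Q_diff)
        finally have "dist (F x) (F y) = norm (Q (x - y))" by (simp add: dist_norm)
        also have "... \<le> sqrt (1 - A / B) * norm (x - y)" by (rule Q_bound)
        finally show "dist (F x) (F y) \<le> sqrt (1 - A / B) * dist x y" by (simp add: dist_norm)
      qed
    qed
    then obtain x where "F x = x" by blast
    then have "x - (1 / B) *\<^sub>R J (S x) + (1/B) *\<^sub>R J z = x" by (simp only: F_def Q_def)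
    then have "(1 / B) *\<^sub>R J (S x) = (1 / B) *\<^sub>R J z" by (rule cancel_aux)
    then have "J (S x) = J z \<or> 1 / B = 0" by (simp only: scaleR_cancel_left)
    moreover have "1 / B \<noteq> 0" using Bpos by simp
    ultimately have "J (S x) = J z" by blast
    then have "J (J (S x)) = J (J z)" by simp
    then have "S x = z" by (simp only: JJ)
    then have "z \<in> range S" by blast }
  then show ?thesis by blast
qed


definition Si where "Si = inv S"
lemma S_Si[simp]: "S (Si y) = y" unfolding Si_def by (rule surj_f_inv_f[OF S_surj])
lemma Si_S[simp]: "Si (S x) = x" unfolding Si_def by (rule inv_f_f[OF S_inj])

lemma Si_eq: "S x = y \<Longrightarrow> Si y = x" by auto

lemma bl_Si: "bounded_linear Si"
proof (rule bounded_linear_intro[where K="1/A"])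
  show "Si (x + y) = Si x + Si y" for x y by (rule Si_eq) (simp add: S_add)
  show "Si (r *\<^sub>R x) = r *\<^sub>R Si x" for r x by (rule Si_eq) (simp add: S_scaleR)
  show "norm (Si x) \<le> norm x * (1 / A)" for x
    using S_lower[of "Si x"] Apos by (simp add: field_simps)
qed

lemma Si_sm: "Si (smul c x) = smul c (Si x)" by (rule Si_eq) (simp add: S_sm)

lemma Si_selfadj: "ip (Si a) b = ip a (Si b)"
proof -
  have "ip (Si a) b = ip (Si a) (S (Si b))" by simp
  also have "... = ip (S (Si a)) (Si b)" by (simp only: S_selfadj)
  finally show ?thesis by simp
qed

lemma main:
  "((\<lambda>n. smul (ip (kn n) k) (Si (kn n))) has_sum k) UNIV \<and>
   ((\<lambda>n. smul (ip (Si (kn n)) k) (kn n)) has_sum k) UNIV"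
proof
  have "((\<lambda>n. Si (smul (ip (kn n) k) (kn n))) has_sum Si (S k)) UNIV"
    by (rule has_sum_bounded_linear[OF bl_Si S_has])
  then show "((\<lambda>n. smul (ip (kn n) k) (Si (kn n))) has_sum k) UNIV" by (simp add: Si_sm)
  have "((\<lambda>n. smul (ip (kn n) (Si k)) (kn n)) has_sum S (Si k)) UNIV" by (rule S_has)
  then show "((\<lambda>n. smul (ip (Si (kn n)) k) (kn n)) has_sum k) UNIV" by (simp add: Si_selfadj)
qed

end

theorem theorem3p6:
  fixes smul :: "complex \<Rightarrow> 'a::{real_normed_vector,banach} \<Rightarrow> 'a"
    and ip :: "'a \<Rightarrow> 'a \<Rightarrow> complex"
    and J :: "'a \<Rightarrow> 'a"
    and kn :: "nat \<Rightarrow> 'a"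
    and k :: 'a
  assumes "krein_space smul ip J"
    and "krein_frame ip kn"
  shows "((\<lambda>n. smul (ip (kn n) k) (inv (frame_operator smul ip kn) (kn n))) has_sum k) UNIV \<and>
         ((\<lambda>n. smul (ip (inv (frame_operator smul ip kn) (kn n)) k) (kn n)) has_sum k) UNIV"
proof -
  from assms(2) obtain A B where AB: "0 < A" "A \<le> B"
    and h: "\<forall>k. summable (\<lambda>n. (cmod (ip (kn n) k))\<^sup>2) \<and>
        A * (norm k)\<^sup>2 \<le> (\<Sum>n. (cmod (ip (kn n) k))\<^sup>2) \<and>
        (\<Sum>n. (cmod (ip (kn n) k))\<^sup>2) \<le> B * (norm k)\<^sup>2"
    unfolding krein_frame_def by (elim exE conjE)
  interpret kf smul ip J kn A B
  proof
    show "krein_space smul ip J" by (rule assms(1))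
    show "0 < A" "A \<le> B" by (rule AB)+
    fix k
    from h have hk: "summable (\<lambda>n. (cmod (ip (kn n) k))\<^sup>2) \<and>
        A * (norm k)\<^sup>2 \<le> (\<Sum>n. (cmod (ip (kn n) k))\<^sup>2) \<and>
        (\<Sum>n. (cmod (ip (kn n) k))\<^sup>2) \<le> B * (norm k)\<^sup>2" by (rule spec)
    then show "summable (\<lambda>n. (cmod (ip (kn n) k))\<^sup>2)" by (rule conjunct1)
    from hk show "A * (norm k)\<^sup>2 \<le> (\<Sum>n. (cmod (ip (kn n) k))\<^sup>2)" by (elim conjE)
    from hk show "(\<Sum>n. (cmod (ip (kn n) k))\<^sup>2) \<le> B * (norm k)\<^sup>2" by (elim conjE)
  qed
  show ?thesis using main[of k] unfolding Si_def S_def .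
qed

end
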